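(* Let $\mathcal N=\mathbb N^*$, $\Omega=\{x,y\}$, and $U\in\mathbb Q^{\underline\Omega}$ the mould with $U^x=1$, $U^{x^pyx^q}=\frac{(-1)^q}{p!q!}$ ($p,q\in\mathbb N$), $U^{\underline\omega}=0$ otherwise. For $M\in\mathbb Q^{\underline{\mathcal N}}$ define $M\odot U\in\mathbb Q^{\underline\Omega}$ by $(M\odot U)^\emptyset=M^\emptyset$ and, for nonempty $\underline\omega$, $$(M\odot U)^{\underline\omega}=\sum_{s\ge1}\ \sum_{\substack{\underline\omega=\underline\omega^1\cdots\underline\omega^s\\ \underline\omega^1,\dots,\underline\omega^s\ne\emptyset}}M^{r(\underline\omega^1)\cdots r(\underline\omega^s)}U^{\underline\omega^1}\cdots U^{\underline\omega^s},$$ where $r(\underline\omega^1)\cdots r(\underline\omega^s)$ is read as a word of length $s$ over $\mathcal N$. Then for any unital associative algebra $\mathbb A$ over a field of characteristic zero, any $X,Y\in\mathbb A$, and any $M\in\mathbb Q^{\underline{\mathcal N}}$, $$MD=(M\odot U)B,$$ where $D$ is the associative comould generated by $D_n=\frac{t^n}{(n-1)!}\mathrm{ad}_X^{n-1}(X+Y)$ ($n\in\mathcal N$) and $B$ is the associative comould generated by $B_x=tX$, $B_y=tY$.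
   Context: For an alphabet $\mathcal M$, $\underline{\mathcal M}$ is its set of finite words (empty word $\emptyset$, length $r(\cdot)$); a mould is a function $\underline{\mathcal M}\to\mathbb Q$. For a family $(C_m)_{m\in\mathcal M}$ in $\mathbb A[[t]]$, the associative comould is $C_\emptyset=1$, $C_{m_1\cdots m_r}=C_{m_1}\cdots C_{m_r}$, and $MC=\sum_{\underline m}M^{\underline m}C_{\underline m}$ ($t$-adically convergent here). $\mathrm{ad}_AB=AB-BA$. *)

theory Defs
  imports "HOL-Computational_Algebra.Formal_Power_Series"
begin

definition is_algebra :: "('k::field \<Rightarrow> 'a::ring_1 \<Rightarrow> 'a) \<Rightarrow> bool" where
  "is_algebra sc \<longleftrightarrow>
     (\<forall>a x y. sc a (x + y) = sc a x + sc a y) \<and>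
     (\<forall>a b x. sc (a + b) x = sc a x + sc b x) \<and>
     (\<forall>a b x. sc (a * b) x = sc a (sc b x)) \<and>
     (\<forall>x. sc 1 x = x) \<and>
     (\<forall>a x y. sc a (x * y) = sc a x * y) \<and>
     (\<forall>a x y. sc a (x * y) = x * sc a y)"

definition ad :: "'a::ring \<Rightarrow> 'a \<Rightarrow> 'a" where
  "ad A B = A * B - B * A"

definition comould :: "('m \<Rightarrow> 'a::ring_1 fps) \<Rightarrow> 'm list \<Rightarrow> 'a fps" where
  "comould C w = prod_list (map C w)"

(* t-adic sum of a family of power series (coefficientwise; each coefficient
   has finite support in the situations considered) *)
definition fps_tsum :: "('w \<Rightarrow> 'a::comm_monoid_add fps) \<Rightarrow> 'w set \<Rightarrow> 'a fps" where
  "fps_tsum F W = Abs_fps (\<lambda>n. \<Sum>w \<in> {w \<in> W. fps_nth (F w) n \<noteq> 0}. fps_nth (F w) n)"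

definition mould_apply ::
  "('k::field_char_0 \<Rightarrow> 'a::ring_1 \<Rightarrow> 'a) \<Rightarrow> ('m list \<Rightarrow> rat) \<Rightarrow> ('m \<Rightarrow> 'a fps) \<Rightarrow> 'm list set \<Rightarrow> 'a fps" where
  "mould_apply sc M C W = fps_tsum (\<lambda>w. Abs_fps (\<lambda>n. sc (of_rat (M w)) (fps_nth (comould C w) n))) W"

datatype omega = ox | oy

definition U :: "omega list \<Rightarrow> rat" where
  "U w = (if w = [ox] then 1
          else if (\<exists>p q. w = replicate p ox @ [oy] @ replicate q ox)
          then (THE r. \<exists>p q. w = replicate p ox @ [oy] @ replicate q ox \<and>
                              r = (-1) ^ q / (fact p * fact q))
          else 0)"

(* M \<odot> U, words over N* encoded as nat lists *)
definition odot :: "(nat list \<Rightarrow> rat) \<Rightarrow> (omega list \<Rightarrow> rat) \<Rightarrow> omega list \<Rightarrow> rat" where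
  "odot M V w = (if w = [] then M []
     else (\<Sum>ws \<in> {ws. concat ws = w \<and> (\<forall>v \<in> set ws. v \<noteq> [])}.
             M (map length ws) * prod_list (map V ws)))"

definition Dgen :: "('k::field_char_0 \<Rightarrow> 'a::ring_1 \<Rightarrow> 'a) \<Rightarrow> 'a \<Rightarrow> 'a \<Rightarrow> nat \<Rightarrow> 'a fps" where
  "Dgen sc X Y n = fps_const (sc (of_rat (1 / fact (n - 1))) ((ad X ^^ (n - 1)) (X + Y))) * fps_X ^ n"

definition Bgen :: "'a::ring_1 \<Rightarrow> 'a \<Rightarrow> omega \<Rightarrow> 'a fps" where
  "Bgen X Y c = (case c of ox \<Rightarrow> fps_const X * fps_X | oy \<Rightarrow> fps_const Y * fps_X)"

end

theory Submission
  imports Defs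
begin


locale alg =
  fixes sc :: "'k::field_char_0 \<Rightarrow> 'a::ring_1 \<Rightarrow> 'a"
  assumes isa: "is_algebra sc"
begin

lemma add_r: "sc a (x + y) = sc a x + sc a y" using isa unfolding is_algebra_def by blast
lemma add_l: "sc (a + b) x = sc a x + sc b x" using isa unfolding is_algebra_def by blast
lemma mul_l: "sc (a * b) x = sc a (sc b x)" using isa unfolding is_algebra_def by blast
lemma one_l: "sc 1 x = x" using isa unfolding is_algebra_def by blast
lemma mult1: "sc a (x * y) = sc a x * y" using isa unfolding is_algebra_def by blast
lemma mult2: "sc a (x * y) = x * sc a y" using isa unfolding is_algebra_def by blast

lemma zero_r[simp]: "sc a 0 = 0"
proof -
  have h: "sc a 0 + 0 = sc a 0 + sc a 0" using add_r[of a 0 0] by (simp only: add_0_right)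
  show ?thesis using h unfolding add_left_cancel by (rule sym)
qed
lemma zero_l[simp]: "sc 0 x = 0"
proof -
  have h: "sc 0 x + 0 = sc 0 x + sc 0 x" using add_l[of 0 0 x] by (simp only: add_0_right)
  show ?thesis using h unfolding add_left_cancel by (rule sym)
qed
lemma sum_r: "sc a (sum f A) = (\<Sum>i\<in>A. sc a (f i))"
  by (induction A rule: infinite_finite_induct) (auto simp: add_r)
lemma sum_l: "sc (sum f A) x = (\<Sum>i\<in>A. sc (f i) x)"
  by (induction A rule: infinite_finite_induct) (auto simp: add_l)
lemma neg_l: "sc (- a) x = - sc a x"
proof -
  have "sc a x + sc (-a) x = 0" using add_l[of a "-a" x] by simp
  then have "sc (-a) x + sc a x = 0" by (simp add: add.commute)
  then show ?thesis by (simp add: eq_neg_iff_add_eq_0)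
qed
lemma nat_l: "sc (of_nat n) x = of_nat n * x"
  by (induction n) (auto simp: add_l one_l algebra_simps)
lemma int_l: "sc (of_int i) x = of_int i * x"
proof (cases i rule: int_cases)
  case (nonneg n) then show ?thesis by (simp add: nat_l)
next
  case (neg n) then show ?thesis by (simp add: neg_l nat_l del: of_nat_Suc)
qed
lemma mult_both: "sc (a * b) (x * y) = sc a x * sc b y"
  by (simp only: mul_l mult2[of b x y] mult1[of a x])

end

lemma ad_add: "(ad X ^^ m) (a + b) = (ad X ^^ m) a + (ad X ^^ m) (b::'a::ring)"
  by (induction m) (auto simp: ad_def algebra_simps)

lemma ad_zero: "(ad X ^^ m) (0::'a::ring) = 0"
  by (induction m) (auto simp: ad_def)

lemma ad_X: "m \<ge> 1 \<Longrightarrow> (ad X ^^ m) (X::'a::ring) = 0"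
  by (cases m) (auto simp: funpow_Suc_right ad_def ad_zero simp del: funpow.simps)

definition cf :: "nat \<Rightarrow> nat \<Rightarrow> int" where
  "cf m p = (-1)^(m-p) * int (m choose p)"

lemma cf_id: "p \<le> m \<Longrightarrow> cf (Suc m) (Suc p) = cf m p - cf m (Suc p)"
proof (cases "p = m")
  case True then show ?thesis by (simp add: cf_def)
next
  case False
  assume "p \<le> m"
  with False obtain r where r: "m - p = Suc r" "m - Suc p = r"
    by (metis Suc_diff_Suc diff_Suc_1 le_neq_implies_less)
  show ?thesis by (simp add: cf_def r algebra_simps)
qed

lemma cf_0: "cf (Suc m) 0 = - cf m 0" by (simp add: cf_def)

lemma ad_pow: "(ad X ^^ m) Y = (\<Sum>p\<le>m. of_int (cf m p) * (X^p * Y * X^(m-p)))"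
  for X Y :: "'a::ring_1"
proof (induction m)
  case 0 then show ?case by (simp add: cf_def)
next
  case (Suc m)
  define f where "f p = X^p * Y * X^(Suc m - p)" for p
  define S where "S = (\<Sum>p\<le>m. of_int (cf m p) * (X^p * Y * X^(m-p)) :: 'a)"
  have XS: "X * S = (\<Sum>p\<le>m. of_int (cf m p) * f (Suc p))"
    unfolding S_def sum_distrib_left f_def
  proof (rule sum.cong)
    fix p assume "p \<in> {..m}"
    have c: "X * (of_int c * z) = of_int c * (X * z)" for c and z :: 'a
      by (metis mult.assoc mult_of_int_commute)
    show "X * (of_int (cf m p) * (X ^ p * Y * X ^ (m - p))) = of_int (cf m p) * (X ^ Suc p * Y * X ^ (Suc m - Suc p))"
      unfolding c by (simp only: diff_Suc_Suc power_Suc mult.assoc)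
  qed simp
  have SX1: "S * X = (\<Sum>p\<le>m. of_int (cf m p) * f p)"
    unfolding S_def sum_distrib_right f_def
  proof (rule sum.cong)
    fix p assume "p \<in> {..m}"
    then have h: "p \<le> m" by simp
    show "of_int (cf m p) * (X ^ p * Y * X ^ (m - p)) * X = of_int (cf m p) * (X ^ p * Y * X ^ (Suc m - p))"
      by (simp only: Suc_diff_le[OF h] power_Suc2 mult.assoc)
  qed simp
  have SX: "S * X = of_int (cf m 0) * f 0 + (\<Sum>p\<le>m. of_int (cf m (Suc p)) * f (Suc p))"
  proof -
    have "S * X = (\<Sum>p\<le>Suc m. of_int (cf m p) * f p)"
    proof -
      have z: "cf m (Suc m) = 0" by (simp add: cf_def)
      show ?thesis unfolding SX1 sum.atMost_Suc z by simp
    qed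
    then show ?thesis unfolding sum.atMost_Suc_shift by simp
  qed
  have "(\<Sum>p\<le>Suc m. of_int (cf (Suc m) p) * (X^p * Y * X^(Suc m-p)) :: 'a)
      = of_int (cf (Suc m) 0) * f 0 + (\<Sum>p\<le>m. of_int (cf (Suc m) (Suc p)) * f (Suc p))"
  proof -
    have "(\<Sum>p\<le>Suc m. of_int (cf (Suc m) p) * (X^p * Y * X^(Suc m-p)) :: 'a)
       = (\<Sum>p\<le>Suc m. of_int (cf (Suc m) p) * f p)" unfolding f_def ..
    also have "\<dots> = of_int (cf (Suc m) 0) * f 0 + (\<Sum>p\<le>m. of_int (cf (Suc m) (Suc p)) * f (Suc p))"
      by (rule sum.atMost_Suc_shift)
    finally show ?thesis .
  qed
  also have "\<dots> = X * S - S * X"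
  proof -
    have e: "(\<Sum>p\<le>m. of_int (cf (Suc m) (Suc p)) * f (Suc p)) =
      (\<Sum>p\<le>m. of_int (cf m p) * f (Suc p)) - (\<Sum>p\<le>m. of_int (cf m (Suc p)) * f (Suc p) :: 'a)"
      unfolding sum_subtractf[symmetric]
      by (rule sum.cong) (simp_all add: cf_id left_diff_distrib)
    have g: "\<And>a b u::'a. - u + (a - b) = a - (u + b)" by (simp add: algebra_simps)
    show ?thesis unfolding XS SX e cf_0 of_int_minus mult_minus_left by (rule g)
  qed
  also have "X * S - S * X = (ad X ^^ Suc m) Y"
  proof -
    have "(ad X ^^ Suc m) Y = ad X ((ad X ^^ m) Y)" by (simp only: funpow.simps comp_def)
    also have "\<dots> = ad X S" unfolding S_def Suc.IH ..
    also have "ad X S = X * S - S * X" by (rule ad_def)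
    finally show ?thesis by (rule sym)
  qed
  finally show ?case by (rule sym)
qed




lemma UNIV_omega: "(UNIV::omega set) = {ox, oy}"
proof -
  have "x \<in> {ox, oy}" for x :: omega by (cases x) auto
  then show ?thesis by auto
qed

lemma finite_words: "finite {u::omega list. length u = k}"
proof -
  have "{u::omega list. length u = k} = {u. set u \<subseteq> UNIV \<and> length u = k}" by simp
  then show ?thesis using finite_lists_length_eq[of "UNIV::omega set" k] by (simp add: UNIV_omega)
qed

lemma tw: "takeWhile (\<lambda>c. c = ox) (replicate p ox @ oy # r) = replicate p ox"
  by (induction p) simp_all
lemma rep_inj': assumes h: "replicate p ox @ oy # replicate q ox = replicate p' ox @ oy # replicate q' ox"
  shows "p = p' \<and> q = q'"
proof -
  have "length (takeWhile (\<lambda>c. c = ox) (replicate p ox @ oy # replicate q ox))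
      = length (takeWhile (\<lambda>c. c = ox) (replicate p' ox @ oy # replicate q' ox))" unfolding h ..
  then have pp: "p = p'" unfolding tw length_replicate .
  have "length (replicate p ox @ oy # replicate q ox) = length (replicate p' ox @ oy # replicate q' ox)"
    unfolding h ..
  then have "q = q'" using pp by simp
  with pp show ?thesis by simp
qed
lemma rep_inj: "replicate p ox @ [oy] @ replicate q ox = replicate p' ox @ [oy] @ replicate q' ox
   \<Longrightarrow> p = p' \<and> q = q'"
  by (rule rep_inj') simp
lemma U_xyx: "U (replicate p ox @ [oy] @ replicate q ox) = (-1)^q / (fact p * fact q)"
proof -
  have ne: "replicate p ox @ [oy] @ replicate q ox \<noteq> [ox]"
  proof
    assume e: "replicate p ox @ [oy] @ replicate q ox = [ox]"
    have "oy \<in> set (replicate p ox @ [oy] @ replicate q ox)" by simp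
    then show False unfolding e by simp
  qed
  have "(THE r. \<exists>p' q'. replicate p ox @ [oy] @ replicate q ox = replicate p' ox @ [oy] @ replicate q' ox \<and>
                              r = (-1) ^ q' / (fact p' * fact q')) = (-1)^q / (fact p * fact q)"
    by (rule the_equality) (auto dest: rep_inj')
  moreover have ex: "\<exists>p' q'. replicate p ox @ [oy] @ replicate q ox = replicate p' ox @ [oy] @ replicate q' ox"
    by blast
  ultimately show ?thesis using ne by (simp add: U_def)
qed

lemma U_ox: "U [ox] = 1" by (simp add: U_def)

lemma U_oy: "U [oy] = 1"
  using U_xyx[of 0 0] by simp

lemma U_zero: "w \<noteq> [ox] \<Longrightarrow> \<not>(\<exists>p q. w = replicate p ox @ [oy] @ replicate q ox) \<Longrightarrow> U w = 0"
  unfolding U_def by auto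

lemma coef_rat: "p \<le> m \<Longrightarrow>
  (1 / fact m) * of_int (cf m p) = ((-1)^(m-p) / (fact p * fact (m-p)) :: rat)"
proof -
  assume h: "p \<le> m"
  have "of_int (cf m p) = ((-1)^(m-p) * (of_nat (m choose p)) :: rat)" by (simp add: cf_def)
  also have "\<dots> = (-1)^(m-p) * (fact m / (fact p * fact (m - p)))" using binomial_fact[OF h, where 'a=rat] by simp
  finally show ?thesis by simp
qed

locale alg2 = alg sc for sc :: "'k::field_char_0 \<Rightarrow> 'a::ring_1 \<Rightarrow> 'a" +
  fixes X Y :: 'a
begin

definition b :: "omega \<Rightarrow> 'a" where "b c = (case c of ox \<Rightarrow> X | oy \<Rightarrow> Y)"
definition d :: "nat \<Rightarrow> 'a" where
  "d k = sc (of_rat (1 / fact (k - 1))) ((ad X ^^ (k - 1)) (X + Y))"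

lemma prod_b: "prod_list (map b (replicate p ox @ [oy] @ replicate q ox)) = X^p * Y * X^q"
  by (simp add: b_def mult.assoc)

lemma lemA1: "(\<Sum>u\<in>{u. length u = 1}. sc (of_rat (U u)) (prod_list (map b u))) = d 1"
proof -
  have W: "{u::omega list. length u = 1} = {[ox], [oy]}"
  proof -
    { fix u :: "omega list" assume "length u = 1"
      then obtain c where "u = [c]" by (metis One_nat_def length_0_conv length_Suc_conv)
      then have "u \<in> {[ox], [oy]}" by (cases c) auto }
    then show ?thesis by auto
  qed
  show ?thesis unfolding W d_def by (simp add: U_ox U_oy one_l b_def)
qed

lemma lemA2:
  assumes m: "m \<ge> 1"
  shows "(\<Sum>u\<in>{u. length u = Suc m}. sc (of_rat (U u)) (prod_list (map b u))) = d (Suc m)"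
proof -
  define w where "w p = replicate p ox @ [oy] @ replicate (m - p) ox" for p
  define T where "T = w ` {..m}"
  have TW: "T \<subseteq> {u. length u = Suc m}" unfolding T_def w_def by auto
  have z: "\<forall>u\<in>{u. length u = Suc m} - T. sc (of_rat (U u)) (prod_list (map b u)) = 0"
  proof
    fix u assume u: "u \<in> {u. length u = Suc m} - T"
    have "u \<noteq> [ox]" using u m by auto
    moreover have "\<not>(\<exists>p q. u = replicate p ox @ [oy] @ replicate q ox)"
    proof
      assume "\<exists>p q. u = replicate p ox @ [oy] @ replicate q ox"
      then obtain p q where pq: "u = replicate p ox @ [oy] @ replicate q ox" by blast
      then have "p + q = m" using u by auto
      then have "u = w p" "p \<in> {..m}" unfolding w_def pq by auto
      then show False using u unfolding T_def by auto
    qed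
    ultimately show "sc (of_rat (U u)) (prod_list (map b u)) = 0" by (simp add: U_zero)
  qed
  have "(\<Sum>u\<in>{u. length u = Suc m}. sc (of_rat (U u)) (prod_list (map b u)))
      = (\<Sum>u\<in>T. sc (of_rat (U u)) (prod_list (map b u)))"
    by (rule sum.mono_neutral_right[OF finite_words TW z])
  also have "\<dots> = (\<Sum>p\<le>m. sc (of_rat (U (w p))) (prod_list (map b (w p))))"
    unfolding T_def
  proof (rule sum.reindex[unfolded comp_def])
    show "inj_on w {..m}"
      by (rule inj_onI) (auto simp: w_def dest: rep_inj')
  qed
  also have "\<dots> = (\<Sum>p\<le>m. sc (of_rat ((-1)^(m-p) / (fact p * fact (m-p)))) (X^p * Y * X^(m-p)))"
    unfolding w_def prod_b U_xyx ..
  also have "\<dots> = (\<Sum>p\<le>m. sc (of_rat (1 / fact m) * of_rat (of_int (cf m p))) (X^p * Y * X^(m-p)))"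
  proof (rule sum.cong)
    fix p assume "p \<in> {..m}"
    then have h: "p \<le> m" by simp
    show "sc (of_rat ((-1)^(m-p) / (fact p * fact (m-p)))) (X^p * Y * X^(m-p)) =
          sc (of_rat (1 / fact m) * of_rat (of_int (cf m p))) (X^p * Y * X^(m-p))"
      unfolding of_rat_mult[symmetric] coef_rat[OF h] ..
  qed simp
  also have "\<dots> = sc (of_rat (1 / fact m)) (\<Sum>p\<le>m. of_int (cf m p) * (X^p * Y * X^(m-p)))"
    unfolding sum_r mul_l of_rat_of_int_eq int_l ..
  also have "\<dots> = d (Suc m)"
    unfolding d_def ad_pow[symmetric] by (simp add: ad_add ad_X[OF m])
  finally show ?thesis .
qed

lemma lemA: "k \<ge> 1 \<Longrightarrow> (\<Sum>u\<in>{u. length u = k}. sc (of_rat (U u)) (prod_list (map b u))) = d k"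
proof (cases "k = 1")
  case True then show ?thesis using lemA1 by simp
next
  case False
  assume "k \<ge> 1"
  with False obtain m where "k = Suc m" "m \<ge> 1" by (cases k) auto
  then show ?thesis using lemA2 by simp
qed

end



definition dec :: "'a list \<Rightarrow> 'a list list set" where
  "dec w = {ws. concat ws = w \<and> (\<forall>v\<in>set ws. v \<noteq> [])}"

lemma dec_nil: "dec [] = {[]}"
proof -
  have "ws = []" if "concat ws = []" "\<forall>v\<in>set ws. v \<noteq> []" for ws :: "'a list list"
  proof (cases ws)
    case (Cons v r)
    then show ?thesis using that by simp
  qed simp
  then show ?thesis unfolding dec_def by auto
qed

lemma odot_dec: "odot M V w = (\<Sum>ws\<in>dec w. M (map length ws) * prod_list (map V ws))"
proof (cases "w = []")
  case True then show ?thesis by (simp add: odot_def dec_nil)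
next
  case False then show ?thesis by (simp add: odot_def dec_def)
qed

lemma dec_bij:
  assumes w: "w \<noteq> []"
  shows "bij_betw (\<lambda>(k, ws). take k w # ws) (SIGMA k:{1..length w}. dec (drop k w)) (dec w)"
proof (rule bij_betw_imageI)
  show "inj_on (\<lambda>(k, ws). take k w # ws) (SIGMA k:{1..length w}. dec (drop k w))"
  proof (rule inj_onI)
    fix p q
    assume p: "p \<in> (SIGMA k:{1..length w}. dec (drop k w))" and q: "q \<in> (SIGMA k:{1..length w}. dec (drop k w))"
      and e0: "(\<lambda>(k, ws). take k w # ws) p = (\<lambda>(k, ws). take k w # ws) q"
    obtain k ws where pk: "p = (k, ws)" by (cases p)
    obtain k' ws' where qk: "q = (k', ws')" by (cases q)
    have k: "k \<le> length w" "k' \<le> length w" using p q pk qk by auto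
    have e: "take k w = take k' w" "ws = ws'" using e0 pk qk by auto
    have "length (take k w) = length (take k' w)" using e by simp
    then have "k = k'" using k by simp
    then show "p = q" using e pk qk by simp
  qed
  show "(\<lambda>(k, ws). take k w # ws) ` (SIGMA k:{1..length w}. dec (drop k w)) = dec w"
  proof
    show "(\<lambda>(k, ws). take k w # ws) ` (SIGMA k:{1..length w}. dec (drop k w)) \<subseteq> dec w"
    proof clarify
      fix k ws assume k: "k \<in> {1..length w}" and ws: "ws \<in> dec (drop k w)"
      have "take k w \<noteq> []" using k w by simp
      moreover have "concat ws = drop k w" "\<forall>v\<in>set ws. v \<noteq> []" using ws unfolding dec_def by auto
      ultimately show "take k w # ws \<in> dec w" unfolding dec_def by simp
    qed
    show "dec w \<subseteq> (\<lambda>(k, ws). take k w # ws) ` (SIGMA k:{1..length w}. dec (drop k w))"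
    proof
      fix ws assume ws: "ws \<in> dec w"
      then have c: "concat ws = w" and ne: "\<forall>v\<in>set ws. v \<noteq> []" unfolding dec_def by auto
      obtain v r where vr: "ws = v # r" using c w by (cases ws) auto
      have v: "v \<noteq> []" using ne vr by simp
      have wv: "w = v @ concat r" using c vr by simp
      define k where "k = length v"
      have tk: "take k w = v" unfolding k_def wv by simp
      have dk: "drop k w = concat r" unfolding k_def wv by simp
      have kin: "k \<in> {1..length w}" using v unfolding k_def wv by (simp add: Suc_le_eq)
      have "r \<in> dec (drop k w)" unfolding dec_def dk using ne vr by simp
      then have "(k, r) \<in> (SIGMA k:{1..length w}. dec (drop k w))" using kin by simp
      moreover have "ws = (\<lambda>(k, ws). take k w # ws) (k, r)" using vr tk by simp
      ultimately show "ws \<in> (\<lambda>(k, ws). take k w # ws) ` (SIGMA k:{1..length w}. dec (drop k w))"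
        by (rule rev_image_eqI)
    qed
  qed
qed

lemma finite_dec: "finite (dec w)"
proof (induction w rule: length_induct)
  case (1 w)
  show ?case
  proof (cases "w = []")
    case True then show ?thesis by (simp add: dec_nil)
  next
    case False
    have "finite (SIGMA k:{1..length w}. dec (drop k w))"
    proof (rule finite_SigmaI)
      fix k assume "k \<in> {1..length w}"
      then have "length (drop k w) < length w" using False by simp
      then show "finite (dec (drop k w))" using "1.IH" by blast
    qed simp
    then show ?thesis using bij_betw_finite[OF dec_bij[OF False]] by simp
  qed
qed

definition Cn :: "nat \<Rightarrow> nat list set" where
  "Cn n = {w. set w \<subseteq> {1..} \<and> sum_list w = n}"

lemma Cn_0: "Cn 0 = {[]}"
proof -
  have "w = []" if "set w \<subseteq> {1..}" "sum_list w = 0" for w :: "nat list"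
  proof (cases w)
    case (Cons a r) then show ?thesis using that by simp
  qed simp
  then show ?thesis unfolding Cn_def by auto
qed

lemma Cn_bij:
  assumes n: "n > 0"
  shows "bij_betw (\<lambda>(k, w). k # w) (SIGMA k:{1..n}. Cn (n - k)) (Cn n)"
proof (rule bij_betw_imageI)
  show "inj_on (\<lambda>(k, w). k # w) (SIGMA k:{1..n}. Cn (n - k))"
    by (rule inj_onI) auto
  show "(\<lambda>(k, w). k # w) ` (SIGMA k:{1..n}. Cn (n - k)) = Cn n"
  proof
    show "(\<lambda>(k, w). k # w) ` (SIGMA k:{1..n}. Cn (n - k)) \<subseteq> Cn n"
      unfolding Cn_def by auto
    show "Cn n \<subseteq> (\<lambda>(k, w). k # w) ` (SIGMA k:{1..n}. Cn (n - k))"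
    proof
      fix w assume w: "w \<in> Cn n"
      then have s: "set w \<subseteq> {1..}" and sl: "sum_list w = n" unfolding Cn_def by auto
      obtain k r where kr: "w = k # r" using sl n by (cases w) auto
      have k1: "k \<ge> 1" using s kr by simp
      have kn: "k + sum_list r = n" using sl kr by simp
      have "r \<in> Cn (n - k)" unfolding Cn_def using s kr kn by auto
      then have "(k, r) \<in> (SIGMA k:{1..n}. Cn (n - k))" using k1 kn by simp
      then show "w \<in> (\<lambda>(k, w). k # w) ` (SIGMA k:{1..n}. Cn (n - k))"
        using kr by (metis (no_types, lifting) case_prod_conv rev_image_eqI)
    qed
  qed
qed

lemma finite_Cn: "finite (Cn n)"
proof (induction n rule: less_induct)
  case (less n)
  show ?case
  proof (cases "n = 0")
    case True then show ?thesis by (simp add: Cn_0)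
  next
    case False
    then have n: "n > 0" by simp
    have "finite (SIGMA k:{1..n}. Cn (n - k))"
    proof (rule finite_SigmaI)
      fix k assume "k \<in> {1..n}"
      then have "n - k < n" by simp
      then show "finite (Cn (n - k))" using less.IH by blast
    qed simp
    then show ?thesis using bij_betw_finite[OF Cn_bij[OF n]] by simp
  qed
qed

lemma split_words:
  assumes "k \<le> n"
  shows "(\<Sum>u\<in>{u::omega list. length u = n}. f (take k u) (drop k u))
       = (\<Sum>x\<in>{x::omega list. length x = k}. \<Sum>y\<in>{y::omega list. length y = n - k}. f x y)"
proof -
  have bij: "bij_betw (\<lambda>(x, y). x @ y) ({x::omega list. length x = k} \<times> {y. length y = n - k})
             {u. length u = n}"
  proof (rule bij_betw_imageI)
    show "inj_on (\<lambda>(x, y). x @ y) ({x::omega list. length x = k} \<times> {y. length y = n - k})"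
    proof (rule inj_onI)
      fix p q
      assume p: "p \<in> {x::omega list. length x = k} \<times> {y. length y = n - k}"
        and q: "q \<in> {x::omega list. length x = k} \<times> {y. length y = n - k}"
        and e0: "(\<lambda>(x, y). x @ y) p = (\<lambda>(x, y). x @ y) q"
      obtain x y where pk: "p = (x, y)" by (cases p)
      obtain x' y' where qk: "q = (x', y')" by (cases q)
      have l: "length x = length x'" using p q pk qk by simp
      have "x @ y = x' @ y'" using e0 pk qk by simp
      then have "x = x' \<and> y = y'" using append_eq_append_conv[of x x' y y'] l by blast
      then show "p = q" using pk qk by simp
    qed
    show "(\<lambda>(x, y). x @ y) ` ({x::omega list. length x = k} \<times> {y. length y = n - k}) = {u. length u = n}"
    proof
      show "(\<lambda>(x, y). x @ y) ` ({x::omega list. length x = k} \<times> {y. length y = n - k}) \<subseteq> {u. length u = n}"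
        using assms by auto
      show "{u. length u = n} \<subseteq> (\<lambda>(x, y). x @ y) ` ({x::omega list. length x = k} \<times> {y. length y = n - k})"
      proof
        fix u :: "omega list" assume "u \<in> {u. length u = n}"
        then have "(take k u, drop k u) \<in> {x::omega list. length x = k} \<times> {y. length y = n - k}"
          using assms by simp
        moreover have "u = (\<lambda>(x, y). x @ y) (take k u, drop k u)" by simp
        ultimately show "u \<in> (\<lambda>(x, y). x @ y) ` ({x::omega list. length x = k} \<times> {y. length y = n - k})"
          by (rule rev_image_eqI)
      qed
    qed
  qed
  have "(\<Sum>u\<in>{u::omega list. length u = n}. f (take k u) (drop k u))
      = (\<Sum>p\<in>{x::omega list. length x = k} \<times> {y. length y = n - k}.
            (\<lambda>u. f (take k u) (drop k u)) ((\<lambda>(x, y). x @ y) p))"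
    by (rule sum.reindex_bij_betw[OF bij, symmetric])
  also have "\<dots> = (\<Sum>p\<in>{x::omega list. length x = k} \<times> {y. length y = n - k}. case_prod f p)"
    by (rule sum.cong) auto
  also have "\<dots> = (\<Sum>x\<in>{x::omega list. length x = k}. \<Sum>y\<in>{y::omega list. length y = n - k}. f x y)"
    by (rule sum.cartesian_product[symmetric])
  finally show ?thesis .
qed




lemma odot_rec:
  assumes u: "u \<noteq> []"
  shows "odot M V u = (\<Sum>k\<in>{1..length u}. V (take k u) * odot (\<lambda>v. M (k # v)) V (drop k u))"
proof -
  have fin: "\<forall>k\<in>{1..length u}. finite (dec (drop k u))" using finite_dec by blast
  have "odot M V u = (\<Sum>ws\<in>dec u. M (map length ws) * prod_list (map V ws))" by (rule odot_dec)
  also have "\<dots> = (\<Sum>p\<in>(SIGMA k:{1..length u}. dec (drop k u)).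
        (\<lambda>ws. M (map length ws) * prod_list (map V ws)) ((\<lambda>(k, ws). take k u # ws) p))"
    by (rule sum.reindex_bij_betw[OF dec_bij[OF u], symmetric])
  also have "\<dots> = (\<Sum>p\<in>(SIGMA k:{1..length u}. dec (drop k u)).
        (\<lambda>k ws. V (take k u) * (M (k # map length ws) * prod_list (map V ws))) (fst p) (snd p))"
  proof (rule sum.cong)
    fix p assume p: "p \<in> (SIGMA k:{1..length u}. dec (drop k u))"
    obtain k ws where pk: "p = (k, ws)" by (cases p)
    have "k \<le> length u" using p pk by auto
    then have "length (take k u) = k" by simp
    then show "(\<lambda>ws. M (map length ws) * prod_list (map V ws)) ((\<lambda>(k, ws). take k u # ws) p) =
      (\<lambda>k ws. V (take k u) * (M (k # map length ws) * prod_list (map V ws))) (fst p) (snd p)"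
      using pk by (simp add: mult.left_commute)
  qed simp
  also have "\<dots> = (\<Sum>k\<in>{1..length u}. \<Sum>ws\<in>dec (drop k u).
        V (take k u) * (M (k # map length ws) * prod_list (map V ws)))"
    using sum.Sigma[OF finite_atLeastAtMost fin, of "\<lambda>k ws. V (take k u) * (M (k # map length ws) * prod_list (map V ws))"]
    by (simp add: case_prod_beta)
  also have "\<dots> = (\<Sum>k\<in>{1..length u}. V (take k u) * odot (\<lambda>v. M (k # v)) V (drop k u))"
    by (simp only: odot_dec sum_distrib_left)
  finally show ?thesis .
qed

context alg2
begin

definition L :: "(nat list \<Rightarrow> rat) \<Rightarrow> nat \<Rightarrow> 'a" where
  "L M n = (\<Sum>w\<in>Cn n. sc (of_rat (M w)) (prod_list (map d w)))"

definition R :: "(nat list \<Rightarrow> rat) \<Rightarrow> nat \<Rightarrow> 'a" where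
  "R M n = (\<Sum>u\<in>{u::omega list. length u = n}. sc (of_rat (odot M U u)) (prod_list (map b u)))"

lemma L_0: "L M 0 = sc (of_rat (M [])) 1"
  unfolding L_def Cn_0 by simp

lemma R_0: "R M 0 = sc (of_rat (M [])) 1"
proof -
  have "{u::omega list. length u = 0} = {[]}" by auto
  then show ?thesis unfolding R_def by (simp add: odot_def)
qed

lemma L_rec:
  assumes n: "n > 0"
  shows "L M n = (\<Sum>k\<in>{1..n}. d k * L (\<lambda>v. M (k # v)) (n - k))"
proof -
  have fin: "\<forall>k\<in>{1..n}. finite (Cn (n - k))" using finite_Cn by blast
  have "L M n = (\<Sum>p\<in>(SIGMA k:{1..n}. Cn (n - k)).
        (\<lambda>w. sc (of_rat (M w)) (prod_list (map d w))) ((\<lambda>(k, w). k # w) p))"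
    unfolding L_def by (rule sum.reindex_bij_betw[OF Cn_bij[OF n], symmetric])
  also have "\<dots> = (\<Sum>p\<in>(SIGMA k:{1..n}. Cn (n - k)).
        (\<lambda>k w. d k * sc (of_rat (M (k # w))) (prod_list (map d w))) (fst p) (snd p))"
  proof (rule sum.cong)
    fix p :: "nat \<times> nat list"
    obtain k w where pk: "p = (k, w)" by (cases p)
    show "(\<lambda>w. sc (of_rat (M w)) (prod_list (map d w))) ((\<lambda>(k, w). k # w) p) =
        (\<lambda>k w. d k * sc (of_rat (M (k # w))) (prod_list (map d w))) (fst p) (snd p)"
      using pk by (simp add: mult2)
  qed simp
  also have "\<dots> = (\<Sum>k\<in>{1..n}. \<Sum>w\<in>Cn (n - k). d k * sc (of_rat (M (k # w))) (prod_list (map d w)))"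
    using sum.Sigma[OF finite_atLeastAtMost fin, of "\<lambda>k w. d k * sc (of_rat (M (k # w))) (prod_list (map d w))"]
    by (simp add: case_prod_beta)
  also have "\<dots> = (\<Sum>k\<in>{1..n}. d k * L (\<lambda>v. M (k # v)) (n - k))"
    unfolding L_def by (simp only: sum_distrib_left)
  finally show ?thesis .
qed

lemma R_rec:
  assumes n: "n > 0"
  shows "R M n = (\<Sum>k\<in>{1..n}. d k * R (\<lambda>v. M (k # v)) (n - k))"
proof -
  define g where "g k x y = sc (of_rat (U x)) (prod_list (map b x)) *
      sc (of_rat (odot (\<lambda>v. M (k # v)) U y)) (prod_list (map b y))" for k x y
  have "R M n = (\<Sum>u\<in>{u::omega list. length u = n}. \<Sum>k\<in>{1..n}. g k (take k u) (drop k u))"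
    unfolding R_def
  proof (rule sum.cong)
    fix u :: "omega list" assume "u \<in> {u. length u = n}"
    then have l: "length u = n" by simp
    then have ne: "u \<noteq> []" using n by auto
    have "sc (of_rat (odot M U u)) (prod_list (map b u))
        = sc (of_rat (\<Sum>k\<in>{1..n}. U (take k u) * odot (\<lambda>v. M (k # v)) U (drop k u))) (prod_list (map b u))"
      unfolding odot_rec[OF ne] l ..
    also have "\<dots> = (\<Sum>k\<in>{1..n}. sc (of_rat (U (take k u)) * of_rat (odot (\<lambda>v. M (k # v)) U (drop k u)))
          (prod_list (map b (take k u)) * prod_list (map b (drop k u))))"
    proof -
      have "prod_list (map b u) = prod_list (map b (take k u)) * prod_list (map b (drop k u))" for k
        by (metis append_take_drop_id map_append prod_list.append)
      then show ?thesis unfolding of_rat_sum sum_l of_rat_mult by simp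
    qed
    also have "\<dots> = (\<Sum>k\<in>{1..n}. g k (take k u) (drop k u))"
      unfolding g_def mult_both ..
    finally show "sc (of_rat (odot M U u)) (prod_list (map b u)) = (\<Sum>k\<in>{1..n}. g k (take k u) (drop k u))" .
  qed simp
  also have "\<dots> = (\<Sum>k\<in>{1..n}. \<Sum>u\<in>{u::omega list. length u = n}. g k (take k u) (drop k u))"
    by (rule sum.swap)
  also have "\<dots> = (\<Sum>k\<in>{1..n}. \<Sum>x\<in>{x::omega list. length x = k}. \<Sum>y\<in>{y::omega list. length y = n - k}. g k x y)"
    by (rule sum.cong) (simp_all add: split_words)
  also have "\<dots> = (\<Sum>k\<in>{1..n}. d k * R (\<lambda>v. M (k # v)) (n - k))"
  proof (rule sum.cong)
    fix k assume "k \<in> {1..n}"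
    then have k: "k \<ge> 1" by simp
    show "(\<Sum>x\<in>{x::omega list. length x = k}. \<Sum>y\<in>{y::omega list. length y = n - k}. g k x y)
        = d k * R (\<lambda>v. M (k # v)) (n - k)"
      unfolding lemA[OF k, symmetric] R_def g_def by (rule sum_product[symmetric])
  qed simp
  finally show ?thesis .
qed

lemma L_eq_R: "L M n = R M n"
proof (induction n arbitrary: M rule: less_induct)
  case (less n)
  show ?case
  proof (cases "n = 0")
    case True then show ?thesis by (simp add: L_0 R_0)
  next
    case False
    then have n: "n > 0" by simp
    show ?thesis unfolding L_rec[OF n] R_rec[OF n]
    proof (rule sum.cong)
      fix k assume "k \<in> {1..n}"
      then have "n - k < n" using n by simp
      then show "d k * L (\<lambda>v. M (k # v)) (n - k) = d k * R (\<lambda>v. M (k # v)) (n - k)"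
        using less.IH by simp
    qed simp
  qed
qed

end



notation fps_nth (infixl \<open>$\<close> 75)

lemma fps_cX_nth: "(fps_const c * fps_X ^ s) $ n = (if n = s then c else 0)"
  unfolding fps_X_power_mult_right_nth by simp

lemma tsum_coeff:
  assumes "finite S" "S \<subseteq> W" "\<forall>w\<in>W - S. F w $ n = 0"
  shows "fps_tsum F W $ n = (\<Sum>w\<in>S. F w $ n)"
proof -
  have sub: "{w \<in> W. F w $ n \<noteq> 0} \<subseteq> S" using assms(3) by blast
  have "fps_tsum F W $ n = (\<Sum>w\<in>{w \<in> W. F w $ n \<noteq> 0}. F w $ n)"
    unfolding fps_tsum_def by simp
  also have "\<dots> = (\<Sum>w\<in>S. F w $ n)"
    by (rule sum.mono_neutral_left[OF assms(1) sub]) (use assms(2) in blast)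
  finally show ?thesis .
qed

context alg2
begin

lemma Dgen_eq: "Dgen sc X Y k = fps_const (d k) * fps_X ^ k"
  unfolding Dgen_def d_def ..

lemma Bgen_eq: "Bgen X Y c = fps_const (b c) * fps_X ^ 1"
  by (cases c) (simp_all add: Bgen_def b_def)

lemma cX_mult: "(fps_const a * fps_X ^ k) * (fps_const c * fps_X ^ s) = fps_const (a * c) * fps_X ^ (k + s)"
proof -
  have "(fps_const a * fps_X ^ k) * (fps_const c * fps_X ^ s) = fps_const a * (fps_X ^ k * fps_const c) * fps_X ^ s"
    by (simp only: mult.assoc)
  also have "\<dots> = fps_const a * (fps_const c * fps_X ^ k) * fps_X ^ s"
    by (simp only: fps_mult_fps_X_power_commute)
  also have "\<dots> = fps_const (a * c) * fps_X ^ (k + s)"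
    by (simp only: mult.assoc power_add fps_const_mult[symmetric])
  finally show ?thesis .
qed

lemma comould_D: "comould (Dgen sc X Y) w = fps_const (prod_list (map d w)) * fps_X ^ sum_list w"
proof (induction w)
  case Nil then show ?case by (simp add: comould_def)
next
  case (Cons k w)
  have "comould (Dgen sc X Y) (k # w) = Dgen sc X Y k * comould (Dgen sc X Y) w"
    by (simp add: comould_def)
  then show ?case unfolding Cons Dgen_eq cX_mult by simp
qed

lemma comould_B: "comould (Bgen X Y) u = fps_const (prod_list (map b u)) * fps_X ^ length u"
proof (induction u)
  case Nil then show ?case by (simp add: comould_def)
next
  case (Cons c u)
  have "comould (Bgen X Y) (c # u) = Bgen X Y c * comould (Bgen X Y) u"
    by (simp add: comould_def)
  then show ?case unfolding Cons Bgen_eq cX_mult by simp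
qed

lemma lhs_coeff: "mould_apply sc M (Dgen sc X Y) (lists {1..}) $ n = L M n"
proof -
  have "mould_apply sc M (Dgen sc X Y) (lists {1..}) $ n
      = (\<Sum>w\<in>Cn n. Abs_fps (\<lambda>n. sc (of_rat (M w)) (comould (Dgen sc X Y) w $ n)) $ n)"
    unfolding mould_apply_def
  proof (rule tsum_coeff[OF finite_Cn])
    show "Cn n \<subseteq> lists {1..}" unfolding Cn_def by auto
    show "\<forall>w\<in>lists {1..} - Cn n. Abs_fps (\<lambda>n. sc (of_rat (M w)) (comould (Dgen sc X Y) w $ n)) $ n = 0"
    proof
      fix w assume w: "w \<in> lists {1..} - Cn n"
      then have "sum_list w \<noteq> n" unfolding Cn_def by auto
      then show "Abs_fps (\<lambda>n. sc (of_rat (M w)) (comould (Dgen sc X Y) w $ n)) $ n = 0"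
        unfolding fps_nth_Abs_fps comould_D fps_cX_nth by simp
    qed
  qed
  also have "\<dots> = L M n"
    unfolding L_def
  proof (rule sum.cong)
    fix w assume "w \<in> Cn n"
    then have "sum_list w = n" unfolding Cn_def by auto
    then show "Abs_fps (\<lambda>n. sc (of_rat (M w)) (comould (Dgen sc X Y) w $ n)) $ n =
         sc (of_rat (M w)) (prod_list (map d w))"
      unfolding fps_nth_Abs_fps comould_D fps_cX_nth by simp
  qed simp
  finally show ?thesis .
qed

lemma rhs_coeff: "mould_apply sc M' (Bgen X Y) UNIV $ n =
   (\<Sum>u\<in>{u::omega list. length u = n}. sc (of_rat (M' u)) (prod_list (map b u)))"
proof -
  have "mould_apply sc M' (Bgen X Y) UNIV $ n
      = (\<Sum>u\<in>{u::omega list. length u = n}. Abs_fps (\<lambda>n. sc (of_rat (M' u)) (comould (Bgen X Y) u $ n)) $ n)"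
    unfolding mould_apply_def
  proof (rule tsum_coeff[OF finite_words])
    show "\<forall>u\<in>UNIV - {u::omega list. length u = n}. Abs_fps (\<lambda>n. sc (of_rat (M' u)) (comould (Bgen X Y) u $ n)) $ n = 0"
    proof
      fix u :: "omega list" assume "u \<in> UNIV - {u. length u = n}"
      then have "length u \<noteq> n" by simp
      then show "Abs_fps (\<lambda>n. sc (of_rat (M' u)) (comould (Bgen X Y) u $ n)) $ n = 0"
        unfolding fps_nth_Abs_fps comould_B fps_cX_nth by simp
    qed
  qed simp
  also have "\<dots> = (\<Sum>u\<in>{u::omega list. length u = n}. sc (of_rat (M' u)) (prod_list (map b u)))"
  proof (rule sum.cong)
    fix u :: "omega list" assume "u \<in> {u. length u = n}"
    then have "length u = n" by simp
    then show "Abs_fps (\<lambda>n. sc (of_rat (M' u)) (comould (Bgen X Y) u $ n)) $ n =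
         sc (of_rat (M' u)) (prod_list (map b u))"
      unfolding fps_nth_Abs_fps comould_B fps_cX_nth by simp
  qed simp
  finally show ?thesis .
qed

lemma main: "mould_apply sc M (Dgen sc X Y) (lists {1..}) = mould_apply sc (odot M U) (Bgen X Y) UNIV"
proof (rule fps_ext)
  fix n
  show "mould_apply sc M (Dgen sc X Y) (lists {1..}) $ n = mould_apply sc (odot M U) (Bgen X Y) UNIV $ n"
    unfolding lhs_coeff rhs_coeff L_eq_R R_def ..
qed

end

theorem theorem5p1:
  fixes sc :: "'k::field_char_0 \<Rightarrow> 'a::ring_1 \<Rightarrow> 'a"
    and X Y :: 'a
    and M :: "nat list \<Rightarrow> rat"
  assumes "is_algebra sc"
  shows "mould_apply sc M (Dgen sc X Y) (lists {1..})
           = mould_apply sc (odot M U) (Bgen X Y) UNIV"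
proof -
  interpret a: alg2 sc X Y by unfold_locales (rule assms)
  show ?thesis by (rule a.main)
qed


end
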